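(* Let $g_X=(X,\psi_X,\varphi_X,\omega_X,\mu_X)$ and $g_Y=(Y,\psi_Y,\varphi_Y,\omega_Y,\mu_Y)$ be two elements of $\mathcal{G}$, let $p\in[1,\infty]$, $q\in[1,\infty)$, and $(\alpha,\beta)\in[0,1]^2$ with $\alpha+\beta\le1$. Then the functional $\Pi(\mu_X,\mu_Y)\to\mathbb{R}_+\cup\{+\infty\}$, $\mu\mapsto\mathcal{E}_{\alpha,\beta,q,p}(g_X,g_Y,\mu)$, is lower semicontinuous on $\Pi(\mu_X,\mu_Y)$ with respect to weak convergence of probability measures.
   Context: $\mathcal{G}$ is the set of tuples $(X,\psi_X,\varphi_X,\omega_X,\mu_X)$ where $X$ is a Polish space, $\psi_X:X\to\Psi$ is a bounded continuous measurable map into a fixed metric space $(\Psi,d_\Psi)$, $\varphi_X:X\times X\to\mathbb{R}$ is a bounded continuous measurable function, $\omega_X:X\times X\to\Omega$ is a bounded continuous measurable map into a fixed metric space $(\Omega,d_\Omega)$, and $\mu_X$ is a fully supported Borel probability measure on $X$. $\Pi(\mu_X,\mu_Y)$ is the set of Borel probability measures on $X\times Y$ with marginals $\mu_X,\mu_Y$. With $c((x,y),(x',y'))=(1-\alpha-\beta)\,d_\Psi(\psi_X(x),\psi_Y(y))^q+\alpha\, d_\Omega(\omega_X(x,x'),\omega_Y(y,y'))^q+\beta\,|\varphi_X(x,x')-\varphi_Y(y,y')|^q$, define $\mathcal{E}_{\alpha,\beta,q,p}(g_X,g_Y,\mu)=\left(\iint c^p\,d\mu\,d\mu\right)^{1/p}$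 for $p<\infty$ (for $p=\infty$, the $\mu\otimes\mu$-essential supremum of $c$). *)

theory Defs
  imports "HOL-Probability.Probability"
begin

text \<open>A network-like object g = (X, psi, phi, omega, mu) of the class G. The space X is the
  carrier type 'x (a Polish space); psi : X -> Psi, phi : X x X -> R, omega : X x X -> Omega.\<close>
definition in_G :: "('x::polish_space \<Rightarrow> 'p::metric_space) \<Rightarrow> ('x \<times> 'x \<Rightarrow> real)
    \<Rightarrow> ('x \<times> 'x \<Rightarrow> 'o::metric_space) \<Rightarrow> 'x measure \<Rightarrow> bool" where
  "in_G psi phi omega mu \<longleftrightarrow>
     continuous_on UNIV psi \<and> bounded (range psi) \<and> psi \<in> borel_measurable borel \<and>
     continuous_on UNIV phi \<and> bounded (range phi) \<and> phi \<in> borel_measurable borel \<and>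
     continuous_on UNIV omega \<and> bounded (range omega) \<and> omega \<in> borel_measurable borel \<and>
     prob_space mu \<and> sets mu = sets borel \<and>
     (\<forall>U. open U \<and> U \<noteq> {} \<longrightarrow> emeasure mu U > 0)"

definition couplings :: "'x::topological_space measure \<Rightarrow> 'y::topological_space measure
    \<Rightarrow> ('x \<times> 'y) measure set" where
  "couplings muX muY = {mu. prob_space mu \<and> sets mu = sets borel \<and>
      distr mu borel fst = muX \<and> distr mu borel snd = muY}"

definition weak_conv_metric :: "(nat \<Rightarrow> 'a::metric_space measure) \<Rightarrow> 'a measure \<Rightarrow> bool" where
  "weak_conv_metric Ms M \<longleftrightarrow> (\<forall>f::'a \<Rightarrow> real. continuous_on UNIV f \<and> bounded (range f) \<longrightarrow>
      (\<lambda>n. \<integral>x. f x \<partial>Ms n) \<longlonglongrightarrow> (\<integral>x. f x \<partial>M))"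

definition cost :: "real \<Rightarrow> real \<Rightarrow> real
    \<Rightarrow> ('x \<Rightarrow> 'p::metric_space) \<Rightarrow> ('x \<times> 'x \<Rightarrow> real) \<Rightarrow> ('x \<times> 'x \<Rightarrow> 'o::metric_space)
    \<Rightarrow> ('y \<Rightarrow> 'p) \<Rightarrow> ('y \<times> 'y \<Rightarrow> real) \<Rightarrow> ('y \<times> 'y \<Rightarrow> 'o)
    \<Rightarrow> ('x \<times> 'y) \<times> ('x \<times> 'y) \<Rightarrow> real" where
  "cost \<alpha> \<beta> q psiX phiX omegaX psiY phiY omegaY z =
     (case z of ((x, y), (x', y')) \<Rightarrow>
       (1 - \<alpha> - \<beta>) * dist (psiX x) (psiY y) powr q
       + \<alpha> * dist (omegaX (x, x')) (omegaY (y, y')) powr q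
       + \<beta> * \<bar>phiX (x, x') - phiY (y, y')\<bar> powr q)"

definition energy :: "real \<Rightarrow> real \<Rightarrow> real \<Rightarrow> ereal
    \<Rightarrow> ('x::topological_space \<Rightarrow> 'p::metric_space) \<Rightarrow> ('x \<times> 'x \<Rightarrow> real) \<Rightarrow> ('x \<times> 'x \<Rightarrow> 'o::metric_space)
    \<Rightarrow> ('y::topological_space \<Rightarrow> 'p) \<Rightarrow> ('y \<times> 'y \<Rightarrow> real) \<Rightarrow> ('y \<times> 'y \<Rightarrow> 'o)
    \<Rightarrow> ('x \<times> 'y) measure \<Rightarrow> ereal" where
  "energy \<alpha> \<beta> q p psiX phiX omegaX psiY phiY omegaY mu =
     (let c = cost \<alpha> \<beta> q psiX phiX omegaX psiY phiY omegaY in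
      if p = \<infinity> then esssup (mu \<Otimes>\<^sub>M mu) (\<lambda>z. ereal (c z))
      else (let I = (\<integral>\<^sup>+ z. ennreal (c z powr real_of_ereal p) \<partial>(mu \<Otimes>\<^sub>M mu)) in
            if I = \<infinity> then \<infinity> else ereal (enn2real I powr (1 / real_of_ereal p))))"

end

theory Submission
  imports Defs
begin

definition lip_env :: "real \<Rightarrow> ('m::metric_space \<Rightarrow> real) \<Rightarrow> 'm \<Rightarrow> real" where
  "lip_env k g z = Inf (range (\<lambda>w. g w + k * dist z w))"

lemma lip_env_bdd:
  assumes "\<And>w. 0 \<le> g w" "0 \<le> k"
  shows "bdd_below (range (\<lambda>w. g w + k * dist z w))"
  using assms by (intro bdd_belowI[of _ 0]) auto

lemma lip_env_nonneg:
  assumes "\<And>w. 0 \<le> g w" "0 \<le> k"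
  shows "0 \<le> lip_env k g z"
  unfolding lip_env_def using assms by (intro cInf_greatest) auto

lemma lip_env_le:
  assumes "\<And>w. 0 \<le> g w" "0 \<le> k"
  shows "lip_env k g z \<le> g z"
proof -
  have "lip_env k g z \<le> g z + k * dist z z"
    unfolding lip_env_def by (rule cInf_lower[OF rangeI lip_env_bdd[OF assms]])
  then show ?thesis by simp
qed

lemma lip_env_lip:
  assumes "\<And>w. 0 \<le> g w" "0 \<le> k"
  shows "lip_env k g z \<le> lip_env k g z' + k * dist z z'"
proof -
  have "lip_env k g z - k * dist z z' \<le> lip_env k g z'"
    unfolding lip_env_def
  proof (rule cInf_greatest)
    fix y assume "y \<in> range (\<lambda>w. g w + k * dist z' w)"
    then obtain w where y: "y = g w + k * dist z' w" by auto
    have "Inf (range (\<lambda>w. g w + k * dist z w)) \<le> g w + k * dist z w"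
      by (rule cInf_lower[OF rangeI lip_env_bdd[OF assms]])
    also have "\<dots> \<le> g w + k * dist z' w + k * dist z z'"
      using dist_triangle[of z w z'] assms(2)
      by (simp add: dist_commute mult_left_mono[of _ _ k, simplified] distrib_left[symmetric])
    finally show "Inf (range (\<lambda>w. g w + k * dist z w)) - k * dist z z' \<le> y" using y by simp
  qed auto
  then show ?thesis by simp
qed

lemma lip_env_cont:
  assumes "\<And>w. 0 \<le> g w" "0 \<le> k"
  shows "continuous_on UNIV (lip_env k g)"
proof (rule lipschitz_on_continuous_on[of k])
  show "k-lipschitz_on UNIV (lip_env k g)"
  proof (rule lipschitz_onI)
    fix x y
    show "dist (lip_env k g x) (lip_env k g y) \<le> k * dist x y"
      using lip_env_lip[of g k x y] lip_env_lip[of g k y x] assms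
      by (simp add: dist_real_def dist_commute abs_le_iff)
  qed fact
qed

lemma lip_env_ge:
  assumes "\<And>w. 0 \<le> g w" "0 \<le> k" "0 < r" "\<And>w. dist z w < r \<Longrightarrow> t \<le> g w" "t \<le> k * r"
  shows "t \<le> lip_env k g z"
  unfolding lip_env_def
proof (rule cInf_greatest)
  fix y assume "y \<in> range (\<lambda>w. g w + k * dist z w)"
  then obtain w where y: "y = g w + k * dist z w" by auto
  show "t \<le> y"
  proof (cases "dist z w < r")
    case True
    then show ?thesis using assms(4)[OF True] assms(2) y by (simp add: add_increasing2)
  next
    case False
    then have "k * r \<le> k * dist z w" using assms(2) by (simp add: mult_left_mono)
    then show ?thesis using assms(1)[of w] assms(5) y by linarith
  qed
qed auto

lemma weak_conv_nn:
  fixes Ms :: "nat \<Rightarrow> 'm::metric_space measure"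
  assumes wc: "weak_conv_metric Ms M"
    and Mn: "\<And>n. prob_space (Ms n)" "\<And>n. sets (Ms n) = sets borel"
    and M: "prob_space M" "sets M = sets borel"
    and g: "continuous_on UNIV g" "\<And>x. 0 \<le> g x" "\<And>x. g x \<le> B"
  shows "(\<lambda>n. \<integral>\<^sup>+x. ennreal (g x) \<partial>Ms n) \<longlonglongrightarrow> (\<integral>\<^sup>+x. ennreal (g x) \<partial>M)"
proof -
  have eq: "(\<integral>\<^sup>+x. ennreal (g x) \<partial>N) = ennreal (\<integral>x. g x \<partial>N)"
    if N: "prob_space N" "sets N = sets borel" for N
  proof -
    interpret N: prob_space N by (rule N(1))
    have gm: "g \<in> borel_measurable N"
      using measurable_cong_sets[OF N(2) refl] borel_measurable_continuous_onI[OF g(1)] by blast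
    have "integrable N g"
      by (rule N.integrable_const_bound[of _ B]) (use g gm in auto)
    then show ?thesis by (intro nn_integral_eq_integral) (auto simp: g)
  qed
  have bd: "bounded (range g)"
    unfolding bounded_real by (intro exI[of _ B] ballI) (clarsimp simp: abs_of_nonneg g)
  have "(\<lambda>n. \<integral>x. g x \<partial>Ms n) \<longlonglongrightarrow> (\<integral>x. g x \<partial>M)"
    using wc g(1) bd unfolding weak_conv_metric_def by blast
  then show ?thesis
    using eq[OF Mn] eq[OF M] by (simp add: tendsto_ennrealI)
qed

lemma meas_pair:
  fixes f :: "'m::{metric_space,second_countable_topology} \<times> 'm \<Rightarrow> 'b::topological_space"
  assumes "sets N = sets borel" "f \<in> borel_measurable borel"
  shows "f \<in> borel_measurable (N \<Otimes>\<^sub>M N)"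
proof -
  have "sets (N \<Otimes>\<^sub>M N) = sets (borel \<Otimes>\<^sub>M borel)"
    by (rule sets_pair_measure_cong) (use assms in auto)
  also have "\<dots> = sets (borel :: ('m \<times> 'm) measure)" by (rule arg_cong[where f=sets, OF borel_prod])
  finally show ?thesis using measurable_cong_sets[OF _ refl] assms(2) by blast
qed

lemma dist_pair_le: "dist (a, b) (c, d) \<le> dist a c + dist b d"
proof -
  have "dist (a, b) (c, d) = sqrt ((dist a c)\<^sup>2 + (dist b d)\<^sup>2)" by (rule dist_Pair_Pair)
  also have "\<dots> \<le> sqrt ((dist a c + dist b d)\<^sup>2)"
    by (intro real_sqrt_le_mono) (simp add: power2_eq_square algebra_simps)
  also have "\<dots> = dist a c + dist b d" by simp
  finally show ?thesis .
qed

lemma cont_meas: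
  assumes "sets N = sets borel" "continuous_on UNIV g"
  shows "(\<lambda>x. ennreal (g x :: real)) \<in> borel_measurable N"
proof -
  have "(\<lambda>x. ennreal (g x)) \<in> borel_measurable borel"
    by (intro borel_measurable_continuous_onI continuous_on_ennreal assms(2))
  then show ?thesis using measurable_cong_sets[OF assms(1) refl] by blast
qed

lemma prod_lsc:
  fixes Ms :: "nat \<Rightarrow> 'm::{metric_space,second_countable_topology} measure"
  assumes wc: "weak_conv_metric Ms M"
    and Mn: "\<And>n. prob_space (Ms n)" "\<And>n. sets (Ms n) = sets borel"
    and M: "prob_space M" "sets M = sets borel"
    and F: "continuous_on UNIV F" "\<And>z. 0 \<le> F z" "\<And>z. F z \<le> B"
  shows "(\<integral>\<^sup>+z. ennreal (F z) \<partial>(M \<Otimes>\<^sub>M M)) \<le> liminf (\<lambda>n. \<integral>\<^sup>+z. ennreal (F z) \<partial>(Ms n \<Otimes>\<^sub>M Ms n))"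
proof -
  have Fb: "(\<lambda>z. ennreal (F z)) \<in> borel_measurable borel"
    by (intro borel_measurable_continuous_onI continuous_on_ennreal F(1))
  have tonelli: "(\<integral>\<^sup>+z. ennreal (F z) \<partial>(N \<Otimes>\<^sub>M N)) = (\<integral>\<^sup>+x. \<integral>\<^sup>+y. ennreal (F (x,y)) \<partial>N \<partial>N)"
    if "prob_space N" "sets N = sets borel" for N
    using sigma_finite_measure.nn_integral_fst[OF prob_space_imp_sigma_finite[OF that(1)] meas_pair[OF that(2) Fb]]
    by simp
  have B0: "0 \<le> B" using F(2)[of undefined] F(3)[of undefined] by linarith
  define hn where "hn n z = (\<integral>\<^sup>+y. ennreal (F (z,y)) \<partial>Ms n)" for n z
  define h where "h z = (\<integral>\<^sup>+y. ennreal (F (z,y)) \<partial>M)" for z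
  have intB: "(\<integral>\<^sup>+y. ennreal (F (z,y)) \<partial>N) \<le> ennreal B" if "prob_space N" for N z
  proof -
    interpret N: prob_space N by (rule that)
    have "(\<integral>\<^sup>+y. ennreal (F (z,y)) \<partial>N) \<le> (\<integral>\<^sup>+y. ennreal B \<partial>N)"
      by (intro nn_integral_mono) (simp add: F(3) ennreal_leI)
    also have "\<dots> = ennreal B" by (simp add: N.emeasure_space_1)
    finally show ?thesis .
  qed
  have hnB: "hn n z \<le> ennreal B" for n z unfolding hn_def by (rule intB[OF Mn(1)])
  have hB: "h z \<le> ennreal B" for z unfolding h_def by (rule intB[OF M(1)])
  have C1: "\<exists>r>0. \<exists>N. \<forall>n\<ge>N. \<forall>w. dist z w < r \<longrightarrow> e < hn n w" if e: "e < h z" for z e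
  proof -
    define \<delta> where "\<delta> j = 1 / (real j + 1)" for j :: nat
    define gd where "gd j v = Inf ((\<lambda>w. F (w, v)) ` ball z (\<delta> j))" for j v
    have \<delta>pos: "0 < \<delta> j" for j unfolding \<delta>_def by simp
    have bdd: "bdd_below ((\<lambda>w. F (w, v)) ` ball z (\<delta> j))" for j v
      using F(2) by (intro bdd_belowI[of _ 0]) auto
    have gd_nonneg: "0 \<le> gd j v" for j v
      unfolding gd_def using \<delta>pos[of j] F(2) by (intro cInf_greatest) auto
    have gd_le: "gd j v \<le> F (w, v)" if "dist z w < \<delta> j" for j v w
      unfolding gd_def using that by (intro cInf_lower[OF _ bdd]) auto
    define G where "G j = lip_env (real j) (gd j)" for j
    have G_nonneg: "0 \<le> G j v" for j v unfolding G_def by (rule lip_env_nonneg) (auto simp: gd_nonneg)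
    have G_le: "G j v \<le> gd j v" for j v unfolding G_def by (rule lip_env_le) (auto simp: gd_nonneg)
    have G_cont: "continuous_on UNIV (G j)" for j unfolding G_def by (rule lip_env_cont) (auto simp: gd_nonneg)
    have G_B: "G j v \<le> B" for j v
      using G_le[of j v] gd_le[of z j v] \<delta>pos[of j] F(3)[of "(z,v)"] by simp
    have ptw: "ennreal (F (z, v)) \<le> liminf (\<lambda>j. ennreal (G j v))" for v
      unfolding le_Liminf_iff
    proof (intro allI impI)
      fix y assume y: "y < ennreal (F (z, v))"
      obtain s where s: "0 \<le> s" "y = ennreal s" using y by (cases y) auto
      have "s < F (z, v)" using y s by (simp add: ennreal_less_iff)
      then obtain s' where s': "s < s'" "s' < F (z, v)" using dense by blast
      have "isCont F (z, v)" using F(1) by (simp add: continuous_on_eq_continuous_at)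
      then obtain d where d: "d > 0" "\<And>p. dist p (z, v) < d \<Longrightarrow> dist (F p) (F (z, v)) < F (z, v) - s'"
        unfolding continuous_at_eps_delta using s' by (meson diff_gt_0_iff_gt)
      have Fgt: "s' < F (w, v')" if "dist z w < d/2" "dist v v' < d/2" for w v'
      proof -
        have "dist (w, v') (z, v) \<le> dist w z + dist v' v" by (rule dist_pair_le)
        also have "\<dots> < d" using that by (simp add: dist_commute)
        finally have "dist (F (w, v')) (F (z, v)) < F (z, v) - s'" by (rule d(2))
        then show ?thesis by (simp add: dist_real_def abs_less_iff)
      qed
      obtain J :: nat where J: "real J \<ge> 2 / d + 2 * s' / d" by (meson real_arch_simple)
      show "\<forall>\<^sub>F j in sequentially. y < ennreal (G j v)"
        unfolding eventually_sequentially
      proof (intro exI allI impI)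
        fix j assume j: "J \<le> j"
        have p1: "0 \<le> 2 / d" "0 \<le> 2 * s' / d" using d(1) s s' by auto
        have j1: "2 / d \<le> real j" and j2: "2 * s' / d \<le> real j" using J j p1 by linarith+
        have "2 / d \<le> real j + 1" using j1 by linarith
        then have \<delta>le: "\<delta> j \<le> d / 2" unfolding \<delta>_def using d(1) by (simp add: field_simps)
        have "s' \<le> G j v" unfolding G_def
        proof (rule lip_env_ge[where r="d/2"])
          show "\<And>w. 0 \<le> gd j w" by (rule gd_nonneg)
          show "0 \<le> real j" by simp
          show "0 < d / 2" using d(1) by simp
          show "s' \<le> gd j w" if "dist v w < d / 2" for w
            unfolding gd_def
          proof (rule cInf_greatest)
            show "(\<lambda>wa. F (wa, w)) ` ball z (\<delta> j) \<noteq> {}" using \<delta>pos[of j] by auto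
            fix x assume "x \<in> (\<lambda>wa. F (wa, w)) ` ball z (\<delta> j)"
            then obtain u where u: "dist z u < \<delta> j" "x = F (u, w)" by auto
            show "s' \<le> x" using Fgt[of u w] u \<delta>le that by simp
          qed
          show "s' \<le> real j * (d / 2)" using j2 d(1) by (simp add: field_simps)
        qed
        then have "ennreal s < ennreal (G j v)" using s s' by (subst ennreal_less_iff) auto
        then show "y < ennreal (G j v)" using s by simp
      qed
    qed
    have "h z \<le> (\<integral>\<^sup>+v. liminf (\<lambda>j. ennreal (G j v)) \<partial>M)"
      unfolding h_def by (intro nn_integral_mono ptw)
    also have "\<dots> \<le> liminf (\<lambda>j. \<integral>\<^sup>+v. ennreal (G j v) \<partial>M)"
      by (rule nn_integral_liminf) (rule cont_meas[OF M(2) G_cont])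
    finally have "e < liminf (\<lambda>j. \<integral>\<^sup>+v. ennreal (G j v) \<partial>M)" using e by simp
    then have "eventually (\<lambda>j. e < \<integral>\<^sup>+v. ennreal (G j v) \<partial>M) sequentially"
      by (rule less_LiminfD)
    then obtain j where j: "e < (\<integral>\<^sup>+v. ennreal (G j v) \<partial>M)"
      by (auto simp: eventually_sequentially)
    have "(\<lambda>n. \<integral>\<^sup>+v. ennreal (G j v) \<partial>Ms n) \<longlonglongrightarrow> (\<integral>\<^sup>+v. ennreal (G j v) \<partial>M)"
      by (rule weak_conv_nn[OF wc Mn M G_cont G_nonneg G_B])
    then have "eventually (\<lambda>n. e < \<integral>\<^sup>+v. ennreal (G j v) \<partial>Ms n) sequentially"
      using j by (rule order_tendstoD(1))
    then obtain N where N: "\<And>n. n \<ge> N \<Longrightarrow> e < (\<integral>\<^sup>+v. ennreal (G j v) \<partial>Ms n)"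
      by (auto simp: eventually_sequentially)
    show ?thesis
    proof (intro exI[of _ "\<delta> j"] conjI \<delta>pos exI[of _ N] allI impI)
      fix n w assume n: "N \<le> n" and w: "dist z w < \<delta> j"
      have "(\<integral>\<^sup>+v. ennreal (G j v) \<partial>Ms n) \<le> hn n w" unfolding hn_def
        by (intro nn_integral_mono ennreal_leI order_trans[OF G_le gd_le[OF w]])
      then show "e < hn n w" using N[OF n] by simp
    qed
  qed
  define a where "a k z = enn2real (INF n\<in>{k..}. hn n z)" for k z
  have a_eq: "ennreal (a k z) = (INF n\<in>{k..}. hn n z)" for k z
  proof -
    have "(INF n\<in>{k..}. hn n z) \<le> hn k z" by (rule INF_lower) simp
    also have "\<dots> < top" using hnB[of k z] by (simp add: le_less_trans)
    finally show ?thesis unfolding a_def by simp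
  qed
  have a_nonneg: "0 \<le> a k z" for k z unfolding a_def by simp
  have a_B: "a k z \<le> B" for k z
  proof -
    have "ennreal (a k z) \<le> hn k z" unfolding a_eq by (rule INF_lower) simp
    then have "ennreal (a k z) \<le> ennreal B" using hnB order_trans by blast
    then show ?thesis using B0 by simp
  qed
  define H where "H k = lip_env (real k) (a k)" for k
  have H_nonneg: "0 \<le> H k z" for k z unfolding H_def by (rule lip_env_nonneg) (auto simp: a_nonneg)
  have H_le: "H k z \<le> a k z" for k z unfolding H_def by (rule lip_env_le) (auto simp: a_nonneg)
  have H_cont: "continuous_on UNIV (H k)" for k unfolding H_def by (rule lip_env_cont) (auto simp: a_nonneg)
  have H_B: "H k z \<le> B" for k z using H_le[of k z] a_B[of k z] by simp
  have ptw2: "h z \<le> liminf (\<lambda>k. ennreal (H k z))" for z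
    unfolding le_Liminf_iff
  proof (intro allI impI)
    fix y assume y: "y < h z"
    obtain y' where y': "y < y'" "y' < h z" using dense[OF y] by blast
    have "y' < top" using y'(2) hB[of z] by (simp add: less_le_trans)
    then obtain s where s: "0 \<le> s" "y' = ennreal s" by (cases y') auto
    obtain r N where r: "r > 0" and rN: "\<And>n w. n \<ge> N \<Longrightarrow> dist z w < r \<Longrightarrow> y' < hn n w"
      using C1[OF y'(2)] by blast
    obtain K :: nat where K: "real K \<ge> s / r" by (meson real_arch_simple)
    show "\<forall>\<^sub>F k in sequentially. y < ennreal (H k z)"
      unfolding eventually_sequentially
    proof (intro exI[of _ "max N K"] allI impI)
      fix k assume k: "max N K \<le> k"
      have "s \<le> H k z" unfolding H_def
      proof (rule lip_env_ge[where r=r])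
        show "\<And>w. 0 \<le> a k w" by (rule a_nonneg)
        show "0 \<le> real k" by simp
        show "0 < r" by fact
        show "s \<le> a k w" if "dist z w < r" for w
        proof -
          have "ennreal s \<le> (INF n\<in>{k..}. hn n w)"
            using rN[OF _ that] k s by (intro INF_greatest less_imp_le) auto
          then have "ennreal s \<le> ennreal (a k w)" by (simp add: a_eq)
          then show ?thesis using a_nonneg[of k w] by simp
        qed
        have "s / r \<le> real k" using K k by linarith
        then show "s \<le> real k * r" using r by (simp add: field_simps)
      qed
      then have "y' \<le> ennreal (H k z)" using s by (simp add: ennreal_leI)
      then show "y < ennreal (H k z)" using y'(1) by (rule less_le_trans[rotated])
    qed
  qed
  have step: "(\<integral>\<^sup>+z. ennreal (H k z) \<partial>M) \<le> liminf (\<lambda>n. \<integral>\<^sup>+z. hn n z \<partial>Ms n)" for k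
  proof -
    have "(\<lambda>n. \<integral>\<^sup>+z. ennreal (H k z) \<partial>Ms n) \<longlonglongrightarrow> (\<integral>\<^sup>+z. ennreal (H k z) \<partial>M)"
      by (rule weak_conv_nn[OF wc Mn M H_cont H_nonneg H_B])
    then have "(\<integral>\<^sup>+z. ennreal (H k z) \<partial>M) = liminf (\<lambda>n. \<integral>\<^sup>+z. ennreal (H k z) \<partial>Ms n)"
      by (simp add: lim_imp_Liminf)
    also have "\<dots> \<le> liminf (\<lambda>n. \<integral>\<^sup>+z. hn n z \<partial>Ms n)"
    proof (rule Liminf_mono)
      show "\<forall>\<^sub>F n in sequentially. (\<integral>\<^sup>+z. ennreal (H k z) \<partial>Ms n) \<le> (\<integral>\<^sup>+z. hn n z \<partial>Ms n)"
        unfolding eventually_sequentially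
      proof (intro exI[of _ k] allI impI nn_integral_mono)
        fix n w assume "k \<le> n"
        have "ennreal (H k w) \<le> ennreal (a k w)" using H_le by (simp add: ennreal_leI)
        also have "\<dots> \<le> hn n w" unfolding a_eq using \<open>k \<le> n\<close> by (intro INF_lower) simp
        finally show "ennreal (H k w) \<le> hn n w" .
      qed
    qed
    finally show ?thesis .
  qed
  have "(\<integral>\<^sup>+z. ennreal (F z) \<partial>(M \<Otimes>\<^sub>M M)) = (\<integral>\<^sup>+z. h z \<partial>M)"
    by (simp add: tonelli[OF M] h_def)
  also have "\<dots> \<le> (\<integral>\<^sup>+z. liminf (\<lambda>k. ennreal (H k z)) \<partial>M)"
    by (intro nn_integral_mono ptw2)
  also have "\<dots> \<le> liminf (\<lambda>k. \<integral>\<^sup>+z. ennreal (H k z) \<partial>M)"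
    by (rule nn_integral_liminf) (rule cont_meas[OF M(2) H_cont])
  also have "\<dots> \<le> liminf (\<lambda>n. \<integral>\<^sup>+z. hn n z \<partial>Ms n)"
    by (rule Liminf_le) (simp_all add: step)
  also have "\<dots> = liminf (\<lambda>n. \<integral>\<^sup>+z. ennreal (F z) \<partial>(Ms n \<Otimes>\<^sub>M Ms n))"
    by (simp add: tonelli[OF Mn] hn_def)
  finally show ?thesis .
qed

lemma bounded_dist2:
  fixes f :: "'a \<Rightarrow> 'p::metric_space" and g :: "'b \<Rightarrow> 'p"
  assumes "bounded (range f)" "bounded (range g)"
  shows "\<exists>D. \<forall>u v. dist (f u) (g v) \<le> D"
proof -
  obtain e1 where e1: "\<forall>y\<in>range f. dist (f undefined) y \<le> e1"
    using assms(1) bounded_any_center by blast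
  obtain e2 where e2: "\<forall>y\<in>range g. dist (f undefined) y \<le> e2"
    using assms(2) bounded_any_center by blast
  show ?thesis
  proof (intro exI allI)
    fix u v
    have "dist (f u) (g v) \<le> dist (f undefined) (f u) + dist (f undefined) (g v)"
      by (rule dist_triangle3)
    also have "\<dots> \<le> e1 + e2" using e1 e2 by (intro add_mono) auto
    finally show "dist (f u) (g v) \<le> e1 + e2" .
  qed
qed

lemma cost_alt:
  "cost \<alpha> \<beta> q psiX phiX omegaX psiY phiY omegaY z =
     (1 - \<alpha> - \<beta>) * dist (psiX (fst (fst z))) (psiY (snd (fst z))) powr q
     + \<alpha> * dist (omegaX (fst (fst z), fst (snd z))) (omegaY (snd (fst z), snd (snd z))) powr q
     + \<beta> * \<bar>phiX (fst (fst z), fst (snd z)) - phiY (snd (fst z), snd (snd z))\<bar> powr q"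
  by (cases z) (auto simp: cost_def split: prod.splits)

lemma cost_props:
  fixes psiX :: "'x::polish_space \<Rightarrow> 'p::metric_space" and phiX :: "'x \<times> 'x \<Rightarrow> real"
    and omegaX :: "'x \<times> 'x \<Rightarrow> 'o::metric_space" and muX :: "'x measure"
    and psiY :: "'y::polish_space \<Rightarrow> 'p" and phiY :: "'y \<times> 'y \<Rightarrow> real"
    and omegaY :: "'y \<times> 'y \<Rightarrow> 'o" and muY :: "'y measure"
  assumes gX: "in_G psiX phiX omegaX muX"
    and gY: "in_G psiY phiY omegaY muY"
    and q: "1 \<le> q"
    and ab: "0 \<le> \<alpha>" "\<alpha> \<le> 1" "0 \<le> \<beta>" "\<beta> \<le> 1" "\<alpha> + \<beta> \<le> 1"
  shows "continuous_on UNIV (cost \<alpha> \<beta> q psiX phiX omegaX psiY phiY omegaY)"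
    and "\<And>z. 0 \<le> cost \<alpha> \<beta> q psiX phiX omegaX psiY phiY omegaY z"
    and "\<exists>Bc. \<forall>z. cost \<alpha> \<beta> q psiX phiX omegaX psiY phiY omegaY z \<le> Bc"
proof -
  note X = gX[unfolded in_G_def] and Y = gY[unfolded in_G_def]
  have cpX: "continuous_on UNIV psiX" and cpY: "continuous_on UNIV psiY"
    and coX: "continuous_on UNIV omegaX" and coY: "continuous_on UNIV omegaY"
    and cfX: "continuous_on UNIV phiX" and cfY: "continuous_on UNIV phiY"
    using X Y by auto
  have q0: "0 < q" using q by simp
  have c1: "continuous_on UNIV (\<lambda>z::('x\<times>'y)\<times>('x\<times>'y). dist (psiX (fst (fst z))) (psiY (snd (fst z))))"
    by (intro continuous_on_dist continuous_on_compose2[OF cpX] continuous_on_compose2[OF cpY]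
        continuous_intros) auto
  have c2: "continuous_on UNIV (\<lambda>z::('x\<times>'y)\<times>('x\<times>'y). dist (omegaX (fst (fst z), fst (snd z))) (omegaY (snd (fst z), snd (snd z))))"
    by (intro continuous_on_dist continuous_on_compose2[OF coX] continuous_on_compose2[OF coY]
        continuous_intros) auto
  have c3: "continuous_on UNIV (\<lambda>z::('x\<times>'y)\<times>('x\<times>'y). \<bar>phiX (fst (fst z), fst (snd z)) - phiY (snd (fst z), snd (snd z))\<bar>)"
    by (intro continuous_on_rabs continuous_on_diff continuous_on_compose2[OF cfX] continuous_on_compose2[OF cfY]
        continuous_intros) auto
  have cc: "continuous_on UNIV (\<lambda>z. f z powr q)" if "continuous_on UNIV f" "\<And>z. 0 \<le> f z" for f :: "('x\<times>'y)\<times>('x\<times>'y) \<Rightarrow> real"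
    by (rule continuous_on_powr') (use that q0 in auto)
  show "continuous_on UNIV (cost \<alpha> \<beta> q psiX phiX omegaX psiY phiY omegaY)"
    unfolding cost_alt[abs_def]
    by (intro continuous_intros cc c1 c2 c3) auto
  show "\<And>z. 0 \<le> cost \<alpha> \<beta> q psiX phiX omegaX psiY phiY omegaY z"
    unfolding cost_alt using ab by (intro add_nonneg_nonneg mult_nonneg_nonneg) auto
  obtain D1 where D1: "\<And>u v. dist (psiX u) (psiY v) \<le> D1"
    using bounded_dist2[of psiX psiY] X Y by blast
  obtain D2 where D2: "\<And>u v. dist (omegaX u) (omegaY v) \<le> D2"
    using bounded_dist2[of omegaX omegaY] X Y by blast
  obtain D3 where D3: "\<And>u v. dist (phiX u) (phiY v) \<le> D3"
    using bounded_dist2[of phiX phiY] X Y by blast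
  show "\<exists>Bc. \<forall>z. cost \<alpha> \<beta> q psiX phiX omegaX psiY phiY omegaY z \<le> Bc"
  proof (intro exI allI)
    fix z :: "('x\<times>'y)\<times>('x\<times>'y)"
    have m: "d powr q \<le> D powr q" if "0 \<le> d" "d \<le> D" for d D
      by (rule powr_mono2) (use that q0 in auto)
    show "cost \<alpha> \<beta> q psiX phiX omegaX psiY phiY omegaY z \<le>
      (1 - \<alpha> - \<beta>) * D1 powr q + \<alpha> * D2 powr q + \<beta> * D3 powr q"
      unfolding cost_alt using ab
      by (intro add_mono mult_left_mono m D1 D2 D3[unfolded dist_real_def]) auto
  qed
qed

theorem mainTheorem2:
  fixes psiX :: "'x::polish_space \<Rightarrow> 'p::metric_space" and phiX :: "'x \<times> 'x \<Rightarrow> real"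
    and omegaX :: "'x \<times> 'x \<Rightarrow> 'o::metric_space" and muX :: "'x measure"
    and psiY :: "'y::polish_space \<Rightarrow> 'p" and phiY :: "'y \<times> 'y \<Rightarrow> real"
    and omegaY :: "'y \<times> 'y \<Rightarrow> 'o" and muY :: "'y measure"
    and p :: ereal and q \<alpha> \<beta> :: real
  assumes gX: "in_G psiX phiX omegaX muX"
    and gY: "in_G psiY phiY omegaY muY"
    and p: "1 \<le> p"
    and q: "1 \<le> q"
    and ab: "0 \<le> \<alpha>" "\<alpha> \<le> 1" "0 \<le> \<beta>" "\<beta> \<le> 1" "\<alpha> + \<beta> \<le> 1"
  shows "\<forall>mus mu. (\<forall>n. mus n \<in> couplings muX muY) \<and> mu \<in> couplings muX muY \<and> weak_conv_metric mus mu
     \<longrightarrow> energy \<alpha> \<beta> q p psiX phiX omegaX psiY phiY omegaY mu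
         \<le> liminf (\<lambda>n. energy \<alpha> \<beta> q p psiX phiX omegaX psiY phiY omegaY (mus n))"
proof (intro allI impI, elim conjE)
  fix mus :: "nat \<Rightarrow> ('x \<times> 'y) measure" and mu
  assume musc: "\<forall>n. mus n \<in> couplings muX muY" and muc: "mu \<in> couplings muX muY"
    and wc: "weak_conv_metric mus mu"
  have Mn: "\<And>n. prob_space (mus n)" "\<And>n. sets (mus n) = sets borel"
    using musc by (auto simp: couplings_def)
  have M: "prob_space mu" "sets mu = sets borel"
    using muc by (auto simp: couplings_def)
  define c where "c = cost \<alpha> \<beta> q psiX phiX omegaX psiY phiY omegaY"
  have c_cont: "continuous_on UNIV c" and c_nn: "\<And>z. 0 \<le> c z"
    using cost_props[OF gX gY q ab] unfolding c_def by auto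
  obtain Bc where Bc: "\<And>z. c z \<le> Bc"
    using cost_props(3)[OF gX gY q ab] unfolding c_def by blast
  let ?E = "\<lambda>N. energy \<alpha> \<beta> q p psiX phiX omegaX psiY phiY omegaY N"
  have cm: "(\<lambda>z. ereal (c z)) \<in> borel_measurable (N \<Otimes>\<^sub>M N)" if "sets N = sets borel" for N :: "('x \<times> 'y) measure"
  proof -
    have "c \<in> borel_measurable (N \<Otimes>\<^sub>M N)"
      by (rule meas_pair[OF that borel_measurable_continuous_onI[OF c_cont]])
    then show ?thesis by measurable
  qed
  show "?E mu \<le> liminf (\<lambda>n. ?E (mus n))"
  proof (cases "p = \<infinity>")
    case True
    have E: "?E N = esssup (N \<Otimes>\<^sub>M N) (\<lambda>z. ereal (c z))" for N
      using True by (simp add: energy_def c_def)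
    show ?thesis
      unfolding E le_Liminf_iff
    proof (intro allI impI)
      fix y assume y: "y < esssup (mu \<Otimes>\<^sub>M mu) (\<lambda>z. ereal (c z))"
      obtain t :: real where t: "y \<le> ereal t" "ereal t < esssup (mu \<Otimes>\<^sub>M mu) (\<lambda>z. ereal (c z))"
      proof (cases y)
        case (real r) then show ?thesis using y that by auto
      next
        case PInf then show ?thesis using y by simp
      next
        case MInf
        show ?thesis
        proof (cases "esssup (mu \<Otimes>\<^sub>M mu) (\<lambda>z. ereal (c z))")
          case (real s) then show ?thesis using that[of "s - 1"] MInf by auto
        next
          case PInf then show ?thesis using that[of 0] MInf by auto
        next
          case MInf then show ?thesis using y by simp
        qed
      qed
      define F where "F z = max 0 (c z - t)" for z
      have F_cont: "continuous_on UNIV F" unfolding F_def by (intro continuous_intros c_cont)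
      have F_nn: "\<And>z. 0 \<le> F z" unfolding F_def by simp
      have F_B: "\<And>z. F z \<le> Bc + \<bar>t\<bar>" unfolding F_def using Bc c_nn
        by (smt (verit) max_def)
      have Fm: "(\<lambda>z. ennreal (F z)) \<in> borel_measurable (N \<Otimes>\<^sub>M N)" if "sets N = sets borel" for N :: "('x \<times> 'y) measure"
        by (rule meas_pair[OF that]) (intro borel_measurable_continuous_onI continuous_on_ennreal F_cont)
      have zero_iff: "(\<integral>\<^sup>+z. ennreal (F z) \<partial>(N \<Otimes>\<^sub>M N)) = 0 \<longleftrightarrow> (AE z in N \<Otimes>\<^sub>M N. c z \<le> t)"
        if "sets N = sets borel" for N :: "('x \<times> 'y) measure"
        by (subst nn_integral_0_iff_AE[OF Fm[OF that]]) (auto simp: F_def max_def)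
      have "(\<integral>\<^sup>+z. ennreal (F z) \<partial>(mu \<Otimes>\<^sub>M mu)) \<noteq> 0"
      proof
        assume "(\<integral>\<^sup>+z. ennreal (F z) \<partial>(mu \<Otimes>\<^sub>M mu)) = 0"
        then have "AE z in mu \<Otimes>\<^sub>M mu. ereal (c z) \<le> ereal t" using zero_iff[OF M(2)] by simp
        then have "esssup (mu \<Otimes>\<^sub>M mu) (\<lambda>z. ereal (c z)) \<le> ereal t"
          by (intro esssup_I cm M(2))
        then show False using t(2) by simp
      qed
      then have "0 < (\<integral>\<^sup>+z. ennreal (F z) \<partial>(mu \<Otimes>\<^sub>M mu))"
        using not_gr_zero by blast
      then have "0 < liminf (\<lambda>n. \<integral>\<^sup>+z. ennreal (F z) \<partial>(mus n \<Otimes>\<^sub>M mus n))"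
        using prod_lsc[OF wc Mn M F_cont F_nn F_B] by (rule less_le_trans)
      then have ev: "eventually (\<lambda>n. 0 < (\<integral>\<^sup>+z. ennreal (F z) \<partial>(mus n \<Otimes>\<^sub>M mus n))) sequentially"
        by (rule less_LiminfD)
      show "\<forall>\<^sub>F n in sequentially. y < esssup (mus n \<Otimes>\<^sub>M mus n) (\<lambda>z. ereal (c z))"
      proof (rule eventually_mono[OF ev])
        fix n assume pos: "0 < (\<integral>\<^sup>+z. ennreal (F z) \<partial>(mus n \<Otimes>\<^sub>M mus n))"
        show "y < esssup (mus n \<Otimes>\<^sub>M mus n) (\<lambda>z. ereal (c z))"
        proof (rule ccontr)
          assume "\<not> y < esssup (mus n \<Otimes>\<^sub>M mus n) (\<lambda>z. ereal (c z))"
          then have "esssup (mus n \<Otimes>\<^sub>M mus n) (\<lambda>z. ereal (c z)) \<le> ereal t" using t(1) by simp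
          note le = this
          have "AE z in mus n \<Otimes>\<^sub>M mus n. ereal (c z) \<le> ereal t"
            using esssup_AE[where M="mus n \<Otimes>\<^sub>M mus n" and f="\<lambda>z. ereal (c z)"]
          proof (rule eventually_mono)
            fix z assume "ereal (c z) \<le> esssup (mus n \<Otimes>\<^sub>M mus n) (\<lambda>z. ereal (c z))"
            then show "ereal (c z) \<le> ereal t" using le by (rule order_trans)
          qed
          then have "AE z in mus n \<Otimes>\<^sub>M mus n. c z \<le> t" by simp
          then have "(\<integral>\<^sup>+z. ennreal (F z) \<partial>(mus n \<Otimes>\<^sub>M mus n)) = 0"
            using zero_iff[OF Mn(2)] by simp
          then show False using pos by simp
        qed
      qed
    qed
  next
    case False
    define pr where "pr = real_of_ereal p"
    have pr1: "1 \<le> pr" using p False unfolding pr_def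
      by (cases p) auto
    define F where "F z = c z powr pr" for z
    have F_cont: "continuous_on UNIV F" unfolding F_def
      by (rule continuous_on_powr') (use c_cont c_nn pr1 in auto)
    have F_nn: "\<And>z. 0 \<le> F z" unfolding F_def by simp
    have F_B: "\<And>z. F z \<le> Bc powr pr" unfolding F_def
      using Bc c_nn pr1 by (intro powr_mono2) auto
    define I where "I N = (\<integral>\<^sup>+z. ennreal (F z) \<partial>(N \<Otimes>\<^sub>M N))" for N
    have I_fin: "I N < top" if "prob_space N" for N :: "('x \<times> 'y) measure"
    proof -
      interpret N: prob_space N by (rule that)
      interpret NN: prob_space "N \<Otimes>\<^sub>M N" by (intro prob_space_pair N.prob_space_axioms)
      have "I N \<le> (\<integral>\<^sup>+z. ennreal (Bc powr pr) \<partial>(N \<Otimes>\<^sub>M N))"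
        unfolding I_def by (intro nn_integral_mono ennreal_leI F_B)
      also have "\<dots> = ennreal (Bc powr pr)" by (simp add: NN.emeasure_space_1)
      finally show ?thesis by (simp add: le_less_trans)
    qed
    have E: "?E N = ereal (enn2real (I N) powr (1 / pr))" if "prob_space N" for N
      using False I_fin[OF that] by (simp add: energy_def c_def I_def F_def pr_def Let_def)
    have lsc: "I mu \<le> liminf (\<lambda>n. I (mus n))"
      unfolding I_def by (rule prod_lsc[OF wc Mn M F_cont F_nn F_B])
    show ?thesis
      unfolding E[OF M(1)] E[OF Mn(1)] le_Liminf_iff
    proof (intro allI impI)
      fix y assume y: "y < ereal (enn2real (I mu) powr (1 / pr))"
      show "\<forall>\<^sub>F n in sequentially. y < ereal (enn2real (I (mus n)) powr (1 / pr))"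
      proof (cases "y < 0")
        case True
        then show ?thesis by (intro always_eventually allI) (auto intro: less_le_trans)
      next
        case False
        then obtain t where t: "y = ereal t" "0 \<le> t" using y by (cases y) auto
        have inv: "(t powr pr) powr (1 / pr) = t" using t(2) pr1 by (simp add: powr_powr)
        have "t powr pr < enn2real (I mu)"
        proof (rule ccontr)
          assume "\<not> t powr pr < enn2real (I mu)"
          then have "enn2real (I mu) powr (1 / pr) \<le> (t powr pr) powr (1 / pr)"
            using pr1 by (intro powr_mono2) auto
          then show False using y t inv by simp
        qed
        then have "ennreal (t powr pr) < ennreal (enn2real (I mu))"
          by (subst ennreal_less_iff) auto
        then have "ennreal (t powr pr) < I mu"
          using ennreal_enn2real[OF I_fin[OF M(1)]] by simp
        then have "ennreal (t powr pr) < liminf (\<lambda>n. I (mus n))" using lsc by (rule less_le_trans)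
        then have ev: "eventually (\<lambda>n. ennreal (t powr pr) < I (mus n)) sequentially"
          by (rule less_LiminfD)
        show ?thesis
        proof (rule eventually_mono[OF ev])
          fix n assume n: "ennreal (t powr pr) < I (mus n)"
          have "ennreal (t powr pr) < ennreal (enn2real (I (mus n)))"
            using n ennreal_enn2real[OF I_fin[OF Mn(1)[of n]]] by simp
          then have "t powr pr < enn2real (I (mus n))"
            by (subst (asm) ennreal_less_iff) auto
          then have "(t powr pr) powr (1 / pr) < enn2real (I (mus n)) powr (1 / pr)"
            using pr1 by (intro powr_less_mono2) auto
          then show "y < ereal (enn2real (I (mus n)) powr (1 / pr))" using t inv by simp
        qed
      qed
    qed
  qed
qed

end
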